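(* Let $(L,\wedge,\vee,0,1)$ and $(L',\wedge',\vee',0',1')$ be bounded lattices. Their additive Nakano mosaics $(L,\boxplus,0)$ and $(L',\boxplus',0')$ are isomorphic if and only if $L$ and $L'$ are isomorphic lattices. Likewise, their multiplicative Nakano mosaics $(L,\boxdot,1)$ and $(L',\boxdot',1')$ are isomorphic if and only if $L$ and $L'$ are isomorphic lattices.
   Context: The additive Nakano mosaic of a bounded lattice $L$ is $(L,\boxplus,0)$ with $x\boxplus y:=\{z\in L\mid x\vee y=x\vee z=z\vee y\}$; the multiplicative Nakano mosaic is $(L,\boxdot,1)$ with $x\boxdot y:=\{z\in L\mid x\wedge y=x\wedge z=z\wedge y\}$. An isomorphism of mosaics $(A,\boxplus,e)\to(A',\boxplus',e')$ is a bijection $f$ with $f(e)=e'$ and $f(x\boxplus y)=f(x)\boxplus' f(y)$ for all $x,y$. *)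

theory Defs
  imports Main
begin

definition nakano_add :: "'a::lattice \<Rightarrow> 'a \<Rightarrow> 'a set" where
  "nakano_add x y = {z. sup x y = sup x z \<and> sup x z = sup z y}"

definition nakano_mul :: "'a::lattice \<Rightarrow> 'a \<Rightarrow> 'a set" where
  "nakano_mul x y = {z. inf x y = inf x z \<and> inf x z = inf z y}"

definition mosaic_iso ::
  "('a \<Rightarrow> 'b) \<Rightarrow> ('a \<Rightarrow> 'a \<Rightarrow> 'a set) \<Rightarrow> 'a \<Rightarrow> ('b \<Rightarrow> 'b \<Rightarrow> 'b set) \<Rightarrow> 'b \<Rightarrow> bool" where
  "mosaic_iso f op e op' e' \<longleftrightarrow>
     bij f \<and> f e = e' \<and> (\<forall>x y. f ` (op x y) = op' (f x) (f y))"

definition lattice_iso :: "('a::lattice \<Rightarrow> 'b::lattice) \<Rightarrow> bool" where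
  "lattice_iso f \<longleftrightarrow> bij f \<and> (\<forall>x y. f (inf x y) = inf (f x) (f y))
                      \<and> (\<forall>x y. f (sup x y) = sup (f x) (f y))"

end

theory Submission
  imports Defs
begin

lemma ord_iso_lattice_iso:
  fixes f :: "'a::lattice \<Rightarrow> 'b::lattice"
  assumes b: "bij f" and o: "\<And>x y. x \<le> y \<longleftrightarrow> f x \<le> f y"
  shows "lattice_iso f"
proof -
  have s: "\<And>w. \<exists>u. w = f u" using b by (metis bij_pointE)
  have "f (sup x y) = sup (f x) (f y)" for x y
  proof (rule order.antisym)
    obtain u where u: "sup (f x) (f y) = f u" using s by blast
    have "f x \<le> f u" "f y \<le> f u" using u by (metis sup_ge1 sup_ge2)+
    hence "sup x y \<le> u" using o by (metis le_sup_iff)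
    thus "f (sup x y) \<le> sup (f x) (f y)" using o u by metis
    show "sup (f x) (f y) \<le> f (sup x y)" using o by (metis sup_ge1 sup_ge2 le_sup_iff)
  qed
  moreover have "f (inf x y) = inf (f x) (f y)" for x y
  proof (rule order.antisym)
    obtain u where u: "inf (f x) (f y) = f u" using s by blast
    have "f u \<le> f x" "f u \<le> f y" using u by (metis inf_le1 inf_le2)+
    hence "u \<le> inf x y" using o by (metis le_inf_iff)
    thus "inf (f x) (f y) \<le> f (inf x y)" using o u by metis
    show "f (inf x y) \<le> inf (f x) (f y)" using o by (metis inf_le1 inf_le2 le_inf_iff)
  qed
  ultimately show ?thesis using b unfolding lattice_iso_def by blast
qed

lemma lattice_iso_ord:
  fixes g :: "'a::lattice \<Rightarrow> 'b::lattice"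
  assumes "lattice_iso g"
  shows "x \<le> y \<longleftrightarrow> g x \<le> g y"
proof -
  have b: "inj g" using assms unfolding lattice_iso_def bij_def by blast
  have "x \<le> y \<longleftrightarrow> sup x y = y" by (simp add: le_iff_sup)
  also have "\<dots> \<longleftrightarrow> g (sup x y) = g y" by (simp add: inj_eq[OF b])
  also have "\<dots> \<longleftrightarrow> sup (g x) (g y) = g y" using assms unfolding lattice_iso_def by simp
  also have "\<dots> \<longleftrightarrow> g x \<le> g y" by (simp add: le_iff_sup)
  finally show ?thesis .
qed

lemma lattice_iso_bot:
  fixes g :: "'a::bounded_lattice \<Rightarrow> 'b::bounded_lattice"
  assumes "lattice_iso g" shows "g bot = bot"
proof -
  obtain u where "bot = g u" using assms unfolding lattice_iso_def by (metis bij_pointE)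
  moreover have "g bot \<le> g u" by (metis lattice_iso_ord[OF assms] bot_least top_greatest)
  ultimately show ?thesis by (simp add: bot_unique)
qed

lemma lattice_iso_top:
  fixes g :: "'a::bounded_lattice \<Rightarrow> 'b::bounded_lattice"
  assumes "lattice_iso g" shows "g top = top"
proof -
  obtain u where "top = g u" using assms unfolding lattice_iso_def by (metis bij_pointE)
  moreover have "g u \<le> g top" by (metis lattice_iso_ord[OF assms] bot_least top_greatest)
  ultimately show ?thesis by (simp add: top_unique)
qed

lemma bij_image_eq:
  assumes b: "bij f" and e: "\<And>z. z \<in> A \<longleftrightarrow> f z \<in> B"
  shows "f ` A = B"
proof
  show "f ` A \<subseteq> B" using e by blast
  show "B \<subseteq> f ` A"
  proof
    fix w assume "w \<in> B"
    obtain u where "w = f u" using b by (metis bij_pointE)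
    thus "w \<in> f ` A" using e \<open>w \<in> B\<close> by blast
  qed
qed

lemma mos_inj_mem:
  assumes "inj f" "f ` A = B" shows "z \<in> A \<longleftrightarrow> f z \<in> B"
  using assms by (metis inj_image_mem_iff)

theorem mainTheorem19:
  fixes L :: "'a::bounded_lattice itself" and L' :: "'b::bounded_lattice itself"
  shows "((\<exists>f :: 'a \<Rightarrow> 'b. mosaic_iso f nakano_add bot nakano_add bot)
            \<longleftrightarrow> (\<exists>g :: 'a \<Rightarrow> 'b. lattice_iso g))
       \<and> ((\<exists>f :: 'a \<Rightarrow> 'b. mosaic_iso f nakano_mul top nakano_mul top)
            \<longleftrightarrow> (\<exists>g :: 'a \<Rightarrow> 'b. lattice_iso g))"
proof (intro conjI iffI)
  assume "\<exists>f :: 'a \<Rightarrow> 'b. mosaic_iso f nakano_add bot nakano_add bot"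
  then obtain f :: "'a \<Rightarrow> 'b" where m: "mosaic_iso f nakano_add bot nakano_add bot" by blast
  have b: "bij f" using m unfolding mosaic_iso_def by blast
  have i: "inj f" using b bij_def by blast
  have key: "\<And>x y :: 'c::lattice. x \<le> y \<longleftrightarrow> y \<in> nakano_add x y"
    unfolding nakano_add_def by (auto simp: le_iff_sup sup_commute)
  have "x \<le> y \<longleftrightarrow> f x \<le> f y" for x y
    using mos_inj_mem[OF i, of "nakano_add x y" "nakano_add (f x) (f y)" y] m key[of x y] key[of "f x" "f y"]
    unfolding mosaic_iso_def by blast
  thus "\<exists>g :: 'a \<Rightarrow> 'b. lattice_iso g" using ord_iso_lattice_iso[OF b] by blast
next
  assume "\<exists>g :: 'a \<Rightarrow> 'b. lattice_iso g"
  then obtain g :: "'a \<Rightarrow> 'b" where g: "lattice_iso g" by blast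
  have b: "bij g" and i: "inj g" using g unfolding lattice_iso_def bij_def by blast+
  have "g ` nakano_add x y = nakano_add (g x) (g y)" for x y
  proof (rule bij_image_eq[OF b])
    fix z
    show "z \<in> nakano_add x y \<longleftrightarrow> g z \<in> nakano_add (g x) (g y)"
      using g unfolding nakano_add_def lattice_iso_def
      by (simp only: mem_Collect_eq) (metis inj_eq[OF i])
  qed
  thus "\<exists>f :: 'a \<Rightarrow> 'b. mosaic_iso f nakano_add bot nakano_add bot"
    using b lattice_iso_bot[OF g] unfolding mosaic_iso_def by blast
next
  assume "\<exists>f :: 'a \<Rightarrow> 'b. mosaic_iso f nakano_mul top nakano_mul top"
  then obtain f :: "'a \<Rightarrow> 'b" where m: "mosaic_iso f nakano_mul top nakano_mul top" by blast
  have b: "bij f" using m unfolding mosaic_iso_def by blast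
  have i: "inj f" using b bij_def by blast
  have key: "\<And>x y :: 'c::lattice. y \<le> x \<longleftrightarrow> y \<in> nakano_mul x y"
    unfolding nakano_mul_def by (auto simp: le_iff_inf inf_commute)
  have "y \<le> x \<longleftrightarrow> f y \<le> f x" for x y
    using mos_inj_mem[OF i, of "nakano_mul x y" "nakano_mul (f x) (f y)" y] m key[of y x] key[of "f y" "f x"]
    unfolding mosaic_iso_def by blast
  thus "\<exists>g :: 'a \<Rightarrow> 'b. lattice_iso g" using ord_iso_lattice_iso[OF b] by blast
next
  assume "\<exists>g :: 'a \<Rightarrow> 'b. lattice_iso g"
  then obtain g :: "'a \<Rightarrow> 'b" where g: "lattice_iso g" by blast
  have b: "bij g" and i: "inj g" using g unfolding lattice_iso_def bij_def by blast+
  have "g ` nakano_mul x y = nakano_mul (g x) (g y)" for x y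
  proof (rule bij_image_eq[OF b])
    fix z
    show "z \<in> nakano_mul x y \<longleftrightarrow> g z \<in> nakano_mul (g x) (g y)"
      using g unfolding nakano_mul_def lattice_iso_def
      by (simp only: mem_Collect_eq) (metis inj_eq[OF i])
  qed
  thus "\<exists>f :: 'a \<Rightarrow> 'b. mosaic_iso f nakano_mul top nakano_mul top"
    using b lattice_iso_top[OF g] unfolding mosaic_iso_def by blast
qed

end
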